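(* Let $-3<\gamma\le1$, $0<\varepsilon\le1$, $\vartheta>0$ sufficiently small and $0<\sigma\le\frac14$, and $\widetilde\vartheta(t)=\vartheta(1+(1+t)^{-\sigma})$. Let $\phi^\varepsilon(t,x)$ satisfy $\sup_{0\le t\le T}\{(1+t)^{5/4}\|\nabla_x\phi^\varepsilon(t)\|_{W^{1,\infty}_x}\}\le\delta$ for a sufficiently small $\delta>0$. Define $\widetilde\nu$ by $$\frac1{\varepsilon^2}\widetilde\nu(t,x,v)=\frac1{\varepsilon^2}\nu(v)+\frac v2\cdot\nabla_x\phi^\varepsilon(t,x)+2\widetilde\vartheta(t)\,v\cdot\nabla_x\phi^\varepsilon(t,x)+\frac{\vartheta\sigma}{(1+t)^{1+\sigma}}|v|^2 .$$ Then, for $0\le t\le T$, $$\frac1{\varepsilon^2}\widetilde\nu\gtrsim\frac1{2\varepsilon^2}\nu(v)+\frac{\langle v\rangle^2}{(1+t)^{1+\sigma}}.$$ In particular, if $-3<\gamma<0$ and $0<\sigma\le\frac1{24}$, then also $$\frac1{\varepsilon^2}\widetilde\nu\gtrsim\varepsilon^{-4/5}(1+t)^{\varrho-1},\qquad\varrho:=\frac{\sigma\gamma+2}{2-\gamma}\in\Big(\frac38,1\Big).$$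
   Context: $\mu(v)=(2\pi)^{-3/2}e^{-|v|^2/2}$, $\langle v\rangle=(1+|v|^2)^{1/2}$, $\nu(v)=\iint_{\mathbb{R}^3\times\mathbb{S}^2}|v-v_*|^\gamma q_0(\theta)\mu(v_* )\mathrm{d}\omega\mathrm{d}v_*$ with $0\le q_0(\theta)\le C|\cos\theta|$ (so $\nu(v)\sim\langle v\rangle^\gamma$). Implicit constants are independent of $\varepsilon$, $t$, $x$, $v$. *)

theory Defs
  imports "HOL-Analysis.Analysis"
begin

type_synonym vec3 = "real ^ 3"

definition mu :: "vec3 \<Rightarrow> real" where
  "mu v = (2 * pi) powr (-3/2) * exp (- ((norm v)\<^sup>2) / 2)"

definition jbr :: "vec3 \<Rightarrow> real" where
  "jbr v = sqrt (1 + (norm v)\<^sup>2)"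

text \<open>Integral over the unit sphere S^2 with its surface measure, written via the
  identity  int_{S^2} f d omega = 3 * int_{|y|<1} f(y/|y|) dy.\<close>
definition sphere_integral :: "(vec3 \<Rightarrow> real) \<Rightarrow> real" where
  "sphere_integral f = 3 * (\<integral> y. indicator (ball 0 1) y * f (y /\<^sub>R norm y) \<partial>lborel)"

definition coll_freq :: "real \<Rightarrow> (real \<Rightarrow> real) \<Rightarrow> vec3 \<Rightarrow> real" where
  "coll_freq \<gamma> q0 v =
     (\<integral> vs. sphere_integral
        (\<lambda>\<omega>. norm (v - vs) powr \<gamma> * q0 (arccos (((v - vs) \<bullet> \<omega>) / norm (v - vs))) * mu vs)
      \<partial>lborel)"

definition vartheta_tilde :: "real \<Rightarrow> real \<Rightarrow> real \<Rightarrow> real" where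
  "vartheta_tilde \<theta> \<sigma> t = \<theta> * (1 + (1 + t) powr (- \<sigma>))"

definition nu_tilde ::
  "real \<Rightarrow> (real \<Rightarrow> real) \<Rightarrow> real \<Rightarrow> real \<Rightarrow> real \<Rightarrow> vec3 \<Rightarrow> real \<Rightarrow> vec3 \<Rightarrow> real" where
  "nu_tilde \<gamma> q0 \<theta> \<sigma> \<epsilon> gphi t v =
     \<epsilon>^2 * (coll_freq \<gamma> q0 v / \<epsilon>^2 + ((1/2) *\<^sub>R v) \<bullet> gphi
             + 2 * vartheta_tilde \<theta> \<sigma> t * (v \<bullet> gphi)
             + \<theta> * \<sigma> / (1 + t) powr (1 + \<sigma>) * (norm v)\<^sup>2)"

text \<open>||g||_{W^{1,infty}} <= b for a vector field g on R^3: sup|g| + Lip(g) <= b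
  (the Lipschitz constant equals the L^infty norm of the derivative, operator norm).\<close>
definition W1inf_le :: "(vec3 \<Rightarrow> vec3) \<Rightarrow> real \<Rightarrow> bool" where
  "W1inf_le g b \<longleftrightarrow> (\<exists>A B. (\<forall>x. norm (g x) \<le> A) \<and>
      (\<forall>x y. norm (g x - g y) \<le> B * norm (x - y)) \<and> A + B \<le> b)"

end

theory Submission
  imports Defs
begin

lemma core1:
  fixes a n s lin c1 \<theta> \<sigma> \<delta> K :: real
  assumes a0: "a \<ge> 0" and n0: "n \<ge> 0" and s: "0 < s" "s \<le> 1"
    and lin: "\<bar>lin\<bar> \<le> K * \<delta> * n * s" and K: "0 \<le> K" "K \<le> 9/2"
    and asmall: "n \<le> 1 \<Longrightarrow> a \<ge> c1/3"
    and c1: "c1 > 0" and ts: "\<theta> * \<sigma> > 0"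
    and d: "0 < \<delta>" "\<delta> \<le> c1/54" "\<delta> \<le> \<theta>*\<sigma>/9"
    and C1: "0 < C1" "C1 \<le> c1/(c1+12)" "C1 \<le> \<theta>*\<sigma>/4"
  shows "a + lin + \<theta>*\<sigma>*n\<^sup>2 * s \<ge> C1 * (a/2 + (1+n\<^sup>2) * s)"
proof (cases "n \<le> 1")
  case True
  have "K*\<delta>*n* s \<le> (9/2)*(c1/54)*1*1"
    by (intro mult_mono) (use K d True s n0 in auto)
  hence l: "lin \<ge> - c1/12" using lin by linarith
  have a3: "a \<ge> c1/3" using asmall True by auto
  have ns: "(1+n\<^sup>2) * s \<le> 2"
  proof -
    have "n\<^sup>2 \<le> 1" using True n0 by (simp add: power_le_one)
    thus ?thesis using s by (smt (verit) mult_left_le mult_le_one)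
  qed
  have "2 \<le> 6*a/c1" using a3 c1 by (simp add: field_simps)
  hence "C1 * (a/2 + (1+n\<^sup>2) * s) \<le> C1 * (a/2 + 6*a/c1)"
    using ns C1 by (intro mult_left_mono) auto
  also have "\<dots> = C1 * (a * (c1+12)/(2*c1))" using c1 by (simp add: field_simps)
  also have "\<dots> \<le> c1/(c1+12) * (a * (c1+12)/(2*c1))"
    using C1 a0 c1 by (intro mult_right_mono) auto
  also have "\<dots> = a/2"
  proof -
    have "c1+12 \<noteq> 0" "c1 \<noteq> 0" "c1 * (c1 * 2) + c1 * 24 \<noteq> 0" using c1 by (auto, smt (verit) mult_pos_pos)
    thus ?thesis by (simp add: field_simps)
  qed
  finally have "C1 * (a/2 + (1+n\<^sup>2) * s) \<le> a/2" .
  moreover have "\<theta>*\<sigma>*n\<^sup>2 * s \<ge> 0" using ts s by simp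
  ultimately show ?thesis using l a3 c1 by linarith
next
  case False
  have "K*\<delta>*n* s \<le> K*\<delta>*n\<^sup>2 * s"
    using False K d s by (intro mult_right_mono mult_left_mono) (auto simp: power2_eq_square)
  also have "\<dots> \<le> (9/2)*(\<theta>*\<sigma>/9)*n\<^sup>2 * s"
    using K d s by (intro mult_right_mono mult_mono) auto
  finally have l: "lin \<ge> - (\<theta>*\<sigma>/2)*n\<^sup>2 * s" using lin by linarith
  have "1 \<le> n\<^sup>2" using False by (simp add: one_le_power)
  hence "C1 * (a/2 + (1+n\<^sup>2) * s) \<le> C1 * (a/2 + 2*n\<^sup>2 * s)"
    using s C1 by (intro mult_left_mono) auto
  also have "\<dots> = C1 * a/2 + C1*(2*n\<^sup>2 * s)" by (simp add: algebra_simps)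
  also have "\<dots> \<le> a/2 + (\<theta>*\<sigma>/4)*(2*n\<^sup>2 * s)"
  proof -
    have "C1 \<le> 1" using C1 c1 by (smt (verit) divide_le_eq_1)
    hence "C1*a/2 \<le> a/2" using a0 C1(1) mult_left_le_one_le[of a C1] by simp
    moreover have "C1*(2*n\<^sup>2 * s) \<le> (\<theta>*\<sigma>/4)*(2*n\<^sup>2 * s)"
      using C1 s by (intro mult_right_mono) auto
    ultimately show ?thesis by linarith
  qed
  finally show ?thesis using l a0 by (simp add: algebra_simps)
qed

lemma interp:
  fixes \<gamma> \<sigma> \<epsilon> t X :: real
  assumes g: "-3 < \<gamma>" "\<gamma> < 0" and sg: "0 < \<sigma>" and e: "0 < \<epsilon>" "\<epsilon> \<le> 1"
    and t: "0 \<le> t" and X: "1 \<le> X"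
  shows "X powr \<gamma> / \<epsilon>\<^sup>2 + X\<^sup>2 / (1+t) powr (1+\<sigma>)
         \<ge> \<epsilon> powr (-4/5) * (1+t) powr ((\<sigma>*\<gamma>+2)/(2-\<gamma>) - 1)"
proof -
  define m where "m = 2 - \<gamma>"
  have m: "2 < m" "m < 5" using g by (auto simp: m_def)
  define A where "A = \<epsilon> powr (-2)"
  define B where "B = (1+t) powr (-(1+\<sigma>))"
  have A0: "A > 0" "B > 0" using e t by (auto simp: A_def B_def)
  have AX: "X powr \<gamma> / \<epsilon>\<^sup>2 = A * X powr \<gamma>" using e
    by (simp add: A_def powr_minus powr_numeral divide_inverse)
  have BX: "X\<^sup>2 / (1+t) powr (1+\<sigma>) = B * X powr 2" using X t
    unfolding B_def by (subst powr_minus) (simp add: divide_inverse)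
  define X0 where "X0 = (A/B) powr (1/m)"
  have X00: "X0 > 0" using A0 by (simp add: X0_def)
  define V where "V = A powr (2/m) * B powr (-\<gamma>/m)"
  have V1: "A * X0 powr \<gamma> = V"
  proof -
    have "A * X0 powr \<gamma> = A powr 1 * (A powr (\<gamma>/m) / B powr (\<gamma>/m))"
      using A0 by (simp add: X0_def powr_powr powr_divide)
    also have "\<dots> = A powr (1 + \<gamma>/m) * B powr (-\<gamma>/m)"
      using A0 by (simp add: powr_add powr_minus divide_inverse)
    also have "1 + \<gamma>/m = 2/m" using m by (simp add: m_def field_simps)
    finally show ?thesis by (simp add: V_def)
  qed
  have V2: "B * X0 powr 2 = V"
  proof -
    have "B * X0 powr 2 = B powr 1 * (A powr (2/m) / B powr (2/m))"
      using A0 by (simp add: X0_def powr_powr powr_divide)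
    also have "\<dots> = A powr (2/m) * B powr (1 - 2/m)"
      using A0 by (simp add: powr_diff)
    also have "1 - 2/m = -\<gamma>/m" using m by (simp add: m_def field_simps)
    finally show ?thesis by (simp add: V_def)
  qed
  have geV: "A * X powr \<gamma> + B * X powr 2 \<ge> V"
  proof (cases "X \<le> X0")
    case True
    have "X0 powr \<gamma> \<le> X powr \<gamma>" using True X g by (intro powr_mono2') auto
    hence "A * X0 powr \<gamma> \<le> A * X powr \<gamma>" using A0 by simp
    moreover have "B * X powr 2 \<ge> 0" using A0 by simp
    ultimately show ?thesis using V1 by linarith
  next
    case False
    have "X0 powr 2 \<le> X powr 2" using False X00 by (intro powr_mono2) auto
    hence "B * X0 powr 2 \<le> B * X powr 2" using A0 by simp
    moreover have "A * X powr \<gamma> \<ge> 0" using A0 by simp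
    ultimately show ?thesis using V2 by linarith
  qed
  have Veq: "V = \<epsilon> powr (-4/m) * (1+t) powr ((\<sigma>*\<gamma>+2)/(2-\<gamma>) - 1)"
  proof -
    have "A powr (2/m) = \<epsilon> powr (-4/m)" using e by (simp add: A_def powr_powr)
    moreover have "B powr (-\<gamma>/m) = (1+t) powr ((\<sigma>*\<gamma>+2)/(2-\<gamma>) - 1)"
    proof -
      have "B powr (-\<gamma>/m) = (1+t) powr (-(1+\<sigma>) * (-\<gamma>/m))" using t by (simp add: B_def powr_powr)
      also have "-(1+\<sigma>) * (-\<gamma>/m) = (\<sigma>*\<gamma>+2)/(2-\<gamma>) - 1"
        using m by (simp add: m_def field_simps)
      finally show ?thesis .
    qed
    ultimately show ?thesis by (simp add: V_def)
  qed
  have "\<epsilon> powr (-4/5) \<le> \<epsilon> powr (-4/m)"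
    using e m by (intro powr_mono') (auto simp: field_simps)
  hence "\<epsilon> powr (-4/5) * (1+t) powr ((\<sigma>*\<gamma>+2)/(2-\<gamma>) - 1) \<le> V"
    unfolding Veq using t by (intro mult_right_mono) auto
  thus ?thesis using geV AX BX by linarith
qed


lemma W1inf_bound:
  assumes "W1inf_le g b" shows "norm (g x) \<le> b"
proof -
  obtain A B where h: "\<forall>x. norm (g x) \<le> A" "\<forall>x y. norm (g x - g y) \<le> B * norm (x - y)" "A + B \<le> b"
    using assms unfolding W1inf_le_def by blast
  have "norm (g (axis 1 1) - g 0) \<le> B * norm (axis 1 (1::real) - (0::vec3))" using h(2) by blast
  hence "0 \<le> B" by (simp, metis norm_ge_zero order_trans)
  moreover have "norm (g x) \<le> A" using h(1) by blast
  ultimately show ?thesis using h(3) by linarith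
qed

lemma nu_tilde_expand:
  assumes "\<epsilon> \<noteq> 0"
  shows "nu_tilde \<gamma> q0 \<theta> \<sigma> \<epsilon> g t v / \<epsilon>^2 =
    coll_freq \<gamma> q0 v / \<epsilon>^2 + (1/2 + 2 * vartheta_tilde \<theta> \<sigma> t) * (v \<bullet> g)
    + \<theta> * \<sigma> * (norm v)\<^sup>2 * (1 / (1 + t) powr (1 + \<sigma>))"
proof -
  have "nu_tilde \<gamma> q0 \<theta> \<sigma> \<epsilon> g t v / \<epsilon>^2 = coll_freq \<gamma> q0 v / \<epsilon>^2 + ((1/2) *\<^sub>R v) \<bullet> g
             + 2 * vartheta_tilde \<theta> \<sigma> t * (v \<bullet> g)
             + \<theta> * \<sigma> / (1 + t) powr (1 + \<sigma>) * (norm v)\<^sup>2"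
    using assms unfolding nu_tilde_def by simp
  also have "\<dots> = coll_freq \<gamma> q0 v / \<epsilon>^2 + (1/2 + 2 * vartheta_tilde \<theta> \<sigma> t) * (v \<bullet> g)
    + \<theta> * \<sigma> * (norm v)\<^sup>2 * (1 / (1 + t) powr (1 + \<sigma>))"
    by (simp add: inner_scaleR_left algebra_simps)
  finally show ?thesis .
qed

lemma pointwise:
  fixes \<gamma> :: real and q0 :: "real \<Rightarrow> real" and c1 \<sigma> \<theta> \<delta> \<epsilon> t :: real and g v :: vec3
  assumes gamma: "-3 < \<gamma>" "\<gamma> \<le> 1"
    and c1: "0 < c1" and nul: "c1 * jbr v powr \<gamma> \<le> coll_freq \<gamma> q0 v"
    and sigma: "0 < \<sigma>" "\<sigma> \<le> 1/4"
    and th: "0 < \<theta>" "\<theta> \<le> 1"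
    and d: "0 < \<delta>" "\<delta> \<le> min (c1/54) (\<theta>*\<sigma>/9)"
    and e: "0 < \<epsilon>" "\<epsilon> \<le> 1" and t: "0 \<le> t"
    and g: "norm g \<le> \<delta> / (1 + t) powr (5/4)"
  shows "nu_tilde \<gamma> q0 \<theta> \<sigma> \<epsilon> g t v / \<epsilon>^2
            \<ge> (min (c1/(c1+12)) (\<theta>*\<sigma>/4) * min (c1/2) 1) * (coll_freq \<gamma> q0 v / (2 * \<epsilon>^2) + (jbr v)^2 / (1 + t) powr (1 + \<sigma>))
          \<and> (\<gamma> < 0 \<and> \<sigma> \<le> 1/24 \<longrightarrow>
               (let \<rho> = (\<sigma> * \<gamma> + 2) / (2 - \<gamma>) in
                  3/8 < \<rho> \<and> \<rho> < 1 \<and>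
                  nu_tilde \<gamma> q0 \<theta> \<sigma> \<epsilon> g t v / \<epsilon>^2
                    \<ge> (min (c1/(c1+12)) (\<theta>*\<sigma>/4) * min (c1/2) 1) * (\<epsilon> powr (-4/5) * (1 + t) powr (\<rho> - 1))))"
proof -
  define C1 where "C1 = min (c1/(c1+12)) (\<theta>*\<sigma>/4)"
  define m where "m = min (c1/2) (1::real)"
  define s where "s = 1 / (1 + t) powr (1 + \<sigma>)"
  define a where "a = coll_freq \<gamma> q0 v / \<epsilon>^2"
  define n where "n = norm v"
  define K where "K = 1/2 + 2 * vartheta_tilde \<theta> \<sigma> t"
  have C1pos: "0 < C1" using c1 th sigma by (simp add: C1_def)
  have m: "0 < m" "m \<le> 1" "m \<le> c1/2" using c1 by (auto simp: m_def)
  have s: "0 < s" "s \<le> 1" using t sigma by (auto simp: s_def ge_one_powr_ge_zero)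
  have n0: "0 \<le> n" by (simp add: n_def)
  have jb: "1 \<le> jbr v" "(jbr v)\<^sup>2 = 1 + n\<^sup>2" by (auto simp: jbr_def n_def)
  have jbg: "0 < jbr v powr \<gamma>" using jb by simp
  have e2: "0 < \<epsilon>^2" "\<epsilon>^2 \<le> 1" using e by (auto simp: power_le_one)
  have coll0: "0 < coll_freq \<gamma> q0 v" using c1 jbg nul by (smt (verit) mult_pos_pos)
  have aj: "a \<ge> c1 * jbr v powr \<gamma> / \<epsilon>^2" using nul e2 by (simp add: a_def divide_right_mono)
  have a_ge: "a \<ge> coll_freq \<gamma> q0 v" using coll0 e2 by (simp add: a_def le_divide_eq mult_left_le)
  have a0: "a \<ge> 0" using a_ge coll0 by linarith
  have asmall: "a \<ge> c1/3" if "n \<le> 1"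
  proof -
    have "(jbr v)\<^sup>2 \<le> 2" using jb that n0 by (simp add: power_le_one)
    hence "(jbr v)\<^sup>2 \<le> (3/2)\<^sup>2" by (simp add: power2_eq_square)
    hence j32: "jbr v \<le> 3/2" by (rule power2_le_imp_le) simp
    have "jbr v ^ 3 = (jbr v)\<^sup>2 * jbr v" by (simp add: power2_eq_square power3_eq_cube)
    also have "\<dots> \<le> 2 * (3/2)" using \<open>(jbr v)\<^sup>2 \<le> 2\<close> j32 jb by (intro mult_mono) auto
    finally have j3: "jbr v ^ 3 \<le> 3" by simp
    have "jbr v powr (-3) \<le> jbr v powr \<gamma>" using jb gamma by (intro powr_mono) auto
    moreover have "jbr v powr (-3) = 1 / jbr v ^ 3" using jb
      by (simp add: powr_minus powr_realpow divide_inverse)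
    moreover have "1/3 \<le> 1 / jbr v ^ 3" using j3 jb by (simp add: field_simps)
    ultimately have "1/3 \<le> jbr v powr \<gamma>" by linarith
    hence "c1/3 \<le> c1 * jbr v powr \<gamma>" using c1 by simp
    thus ?thesis using nul a_ge by linarith
  qed
  have tpow: "(1+t) powr (-\<sigma>) \<le> 1" using powr_mono[of "-\<sigma>" 0 "1+t"] t sigma by simp
  have K: "0 \<le> K" "K \<le> 9/2"
  proof -
    have p0: "0 \<le> (1+t) powr (-\<sigma>)" by simp
    have "\<theta> * (1 + (1+t) powr (-\<sigma>)) \<le> 1 * 2" using th tpow p0 by (intro mult_mono) auto
    moreover have "0 \<le> \<theta> * (1 + (1+t) powr (-\<sigma>))" using th p0 by simp
    ultimately show "0 \<le> K" "K \<le> 9/2" by (auto simp: K_def vartheta_tilde_def)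
  qed
  have gs: "norm g \<le> \<delta> * s"
  proof -
    have "(1+t) powr (1+\<sigma>) \<le> (1+t) powr (5/4)" using t sigma by (intro powr_mono) auto
    hence "\<delta> / (1 + t) powr (5/4) \<le> \<delta> / (1+t) powr (1+\<sigma>)" using d t
      by (intro divide_left_mono) auto
    thus ?thesis using g by (simp add: s_def)
  qed
  have lin: "\<bar>K * (v \<bullet> g)\<bar> \<le> K * \<delta> * n * s"
  proof -
    have "\<bar>v \<bullet> g\<bar> \<le> n * norm g" by (simp add: n_def Cauchy_Schwarz_ineq2)
    also have "\<dots> \<le> n * (\<delta> * s)" using gs n0 by (intro mult_left_mono) auto
    finally have "\<bar>v \<bullet> g\<bar> \<le> \<delta> * n * s" by (simp add: algebra_simps)
    hence "K * \<bar>v \<bullet> g\<bar> \<le> K * (\<delta> * n * s)" using K by (intro mult_left_mono) auto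
    thus ?thesis using K by (simp add: abs_mult mult.assoc)
  qed
  have exp: "nu_tilde \<gamma> q0 \<theta> \<sigma> \<epsilon> g t v / \<epsilon>^2 = a + K * (v \<bullet> g) + \<theta>*\<sigma>*n\<^sup>2 * s"
    using e by (simp add: nu_tilde_expand a_def K_def n_def s_def)
  have main: "nu_tilde \<gamma> q0 \<theta> \<sigma> \<epsilon> g t v / \<epsilon>^2 \<ge> C1 * (a/2 + (1+n\<^sup>2) * s)"
  proof -
    have C1b: "C1 \<le> c1/(c1+12)" "C1 \<le> \<theta>*\<sigma>/4" unfolding C1_def by (rule min.cobounded1, rule min.cobounded2)
    show ?thesis unfolding exp
      by (rule core1[OF a0 n0 s lin K asmall c1 _ d(1) _ _ C1pos C1b])
         (use th sigma d in auto)
  qed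
  have tgt: "coll_freq \<gamma> q0 v / (2 * \<epsilon>^2) + (jbr v)^2 / (1 + t) powr (1 + \<sigma>) = a/2 + (1+n\<^sup>2) * s"
    using jb by (simp add: a_def s_def)
  have tgt0: "a/2 + (1+n\<^sup>2) * s \<ge> 0" using a0 s by simp
  have part1: "nu_tilde \<gamma> q0 \<theta> \<sigma> \<epsilon> g t v / \<epsilon>^2 \<ge> (C1 * m) * (a/2 + (1+n\<^sup>2) * s)"
  proof -
    have "(C1 * m) * (a/2 + (1+n\<^sup>2) * s) \<le> C1 * (a/2 + (1+n\<^sup>2) * s)"
      using m C1pos tgt0 by (simp add: mult_left_le_one_le mult.assoc)
    thus ?thesis using main by linarith
  qed
  show ?thesis
  proof (intro conjI impI)
    show "nu_tilde \<gamma> q0 \<theta> \<sigma> \<epsilon> g t v / \<epsilon>^2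
            \<ge> (min (c1/(c1+12)) (\<theta>*\<sigma>/4) * min (c1/2) 1) * (coll_freq \<gamma> q0 v / (2 * \<epsilon>^2) + (jbr v)^2 / (1 + t) powr (1 + \<sigma>))"
      using part1 unfolding tgt C1_def m_def .
  next
    assume gs2: "\<gamma> < 0 \<and> \<sigma> \<le> 1/24"
    define \<rho> where "\<rho> = (\<sigma> * \<gamma> + 2) / (2 - \<gamma>)"
    have den: "2 - \<gamma> > 0" using gs2 by simp
    have r1: "3/8 < \<rho>"
    proof -
      have "\<sigma> * (\<gamma> + 3) > 0" using sigma gamma by simp
      hence "8*(\<sigma>*\<gamma>+2) > 3*(2-\<gamma>)" using gs2 gamma sigma by (simp add: algebra_simps)
      thus ?thesis using den by (simp add: \<rho>_def field_simps)
    qed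
    have r2: "\<rho> < 1"
    proof -
      have "\<sigma> * \<gamma> < 0" using sigma gs2 by (simp add: mult_pos_neg)
      thus ?thesis using den gs2 by (simp add: \<rho>_def field_simps)
    qed
    have "a/2 + (1+n\<^sup>2) * s \<ge> m * (jbr v powr \<gamma> / \<epsilon>\<^sup>2 + (jbr v)\<^sup>2 / (1+t) powr (1+\<sigma>))"
    proof -
      have "m * (jbr v powr \<gamma> / \<epsilon>\<^sup>2) \<le> (c1/2) * (jbr v powr \<gamma> / \<epsilon>\<^sup>2)"
        using m jbg e2 by (intro mult_right_mono) auto
      also have "\<dots> \<le> a/2" using aj by simp
      finally have x1: "m * (jbr v powr \<gamma> / \<epsilon>\<^sup>2) \<le> a/2" .
      have "m * ((jbr v)\<^sup>2 / (1+t) powr (1+\<sigma>)) \<le> (jbr v)\<^sup>2 / (1+t) powr (1+\<sigma>)"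
        using m t by (intro mult_left_le_one_le) auto
      also have "\<dots> = (1+n\<^sup>2) * s" using jb by (simp add: s_def)
      finally have x2: "m * ((jbr v)\<^sup>2 / (1+t) powr (1+\<sigma>)) \<le> (1+n\<^sup>2) * s" .
      show ?thesis unfolding distrib_left using x1 x2 by linarith
    qed
    moreover have "jbr v powr \<gamma> / \<epsilon>\<^sup>2 + (jbr v)\<^sup>2 / (1+t) powr (1+\<sigma>) \<ge> \<epsilon> powr (-4/5) * (1 + t) powr (\<rho> - 1)"
      unfolding \<rho>_def by (rule interp) (use gamma gs2 sigma e t jb in auto)
    ultimately have "a/2 + (1+n\<^sup>2) * s \<ge> m * (\<epsilon> powr (-4/5) * (1 + t) powr (\<rho> - 1))"
      using m by (smt (verit) mult_left_mono)
    hence "(C1 * m) * (\<epsilon> powr (-4/5) * (1 + t) powr (\<rho> - 1)) \<le> C1 * (a/2 + (1+n\<^sup>2) * s)"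
      using C1pos by (simp add: mult.assoc mult_left_mono)
    hence "nu_tilde \<gamma> q0 \<theta> \<sigma> \<epsilon> g t v / \<epsilon>^2 \<ge> (C1 * m) * (\<epsilon> powr (-4/5) * (1 + t) powr (\<rho> - 1))"
      using main by linarith
    thus "let \<rho> = (\<sigma> * \<gamma> + 2) / (2 - \<gamma>) in
                  3/8 < \<rho> \<and> \<rho> < 1 \<and>
                  nu_tilde \<gamma> q0 \<theta> \<sigma> \<epsilon> g t v / \<epsilon>^2
                    \<ge> (min (c1/(c1+12)) (\<theta>*\<sigma>/4) * min (c1/2) 1) * (\<epsilon> powr (-4/5) * (1 + t) powr (\<rho> - 1))"
      using r1 r2 unfolding Let_def \<rho>_def C1_def m_def by blast
  qed
qed

theorem lemma3p1:
  fixes \<gamma> :: real and q0 :: "real \<Rightarrow> real" and Cq c1 c2 :: real and \<sigma> :: real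
  assumes gamma: "-3 < \<gamma>" "\<gamma> \<le> 1"
    and q0_meas: "q0 \<in> borel_measurable borel"
    and q0_bd: "\<And>a. 0 \<le> q0 a \<and> q0 a \<le> Cq * \<bar>cos a\<bar>"
    and nu_equiv: "0 < c1" "\<And>v. c1 * jbr v powr \<gamma> \<le> coll_freq \<gamma> q0 v"
                  "\<And>v. coll_freq \<gamma> q0 v \<le> c2 * jbr v powr \<gamma>"
    and sigma: "0 < \<sigma>" "\<sigma> \<le> 1/4"
  shows "\<exists>\<theta>0>0. \<forall>\<theta>. 0 < \<theta> \<and> \<theta> \<le> \<theta>0 \<longrightarrow>
           (\<exists>\<delta>0>0. \<exists>C>0. \<forall>\<delta> \<epsilon> T (\<phi> :: real \<Rightarrow> vec3 \<Rightarrow> real) (gphi :: real \<Rightarrow> vec3 \<Rightarrow> vec3).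
              0 < \<delta> \<and> \<delta> \<le> \<delta>0 \<and> 0 < \<epsilon> \<and> \<epsilon> \<le> 1 \<and> 0 \<le> T \<and>
              (\<forall>t\<in>{0..T}. \<forall>x. GDERIV (\<phi> t) x :> gphi t x) \<and>
              (\<forall>t\<in>{0..T}. W1inf_le (gphi t) (\<delta> / (1 + t) powr (5/4)))
              \<longrightarrow> (\<forall>t\<in>{0..T}. \<forall>x v.
                    nu_tilde \<gamma> q0 \<theta> \<sigma> \<epsilon> (gphi t x) t v / \<epsilon>^2
                      \<ge> C * (coll_freq \<gamma> q0 v / (2 * \<epsilon>^2) + (jbr v)^2 / (1 + t) powr (1 + \<sigma>))
                    \<and> (\<gamma> < 0 \<and> \<sigma> \<le> 1/24 \<longrightarrow>
                         (let \<rho> = (\<sigma> * \<gamma> + 2) / (2 - \<gamma>) in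
                            3/8 < \<rho> \<and> \<rho> < 1 \<and>
                            nu_tilde \<gamma> q0 \<theta> \<sigma> \<epsilon> (gphi t x) t v / \<epsilon>^2
                              \<ge> C * (\<epsilon> powr (-4/5) * (1 + t) powr (\<rho> - 1))))))"
  
proof -
  show ?thesis
  proof (rule exI[of _ 1], intro conjI allI impI)
    fix \<theta> :: real assume th: "0 < \<theta> \<and> \<theta> \<le> 1"
    show "\<exists>\<delta>0>0. \<exists>C>0. \<forall>\<delta> \<epsilon> T (\<phi> :: real \<Rightarrow> vec3 \<Rightarrow> real) (gphi :: real \<Rightarrow> vec3 \<Rightarrow> vec3).
              0 < \<delta> \<and> \<delta> \<le> \<delta>0 \<and> 0 < \<epsilon> \<and> \<epsilon> \<le> 1 \<and> 0 \<le> T \<and>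
              (\<forall>t\<in>{0..T}. \<forall>x. GDERIV (\<phi> t) x :> gphi t x) \<and>
              (\<forall>t\<in>{0..T}. W1inf_le (gphi t) (\<delta> / (1 + t) powr (5/4)))
              \<longrightarrow> (\<forall>t\<in>{0..T}. \<forall>x v.
                    nu_tilde \<gamma> q0 \<theta> \<sigma> \<epsilon> (gphi t x) t v / \<epsilon>^2
                      \<ge> C * (coll_freq \<gamma> q0 v / (2 * \<epsilon>^2) + (jbr v)^2 / (1 + t) powr (1 + \<sigma>))
                    \<and> (\<gamma> < 0 \<and> \<sigma> \<le> 1/24 \<longrightarrow>
                         (let \<rho> = (\<sigma> * \<gamma> + 2) / (2 - \<gamma>) in
                            3/8 < \<rho> \<and> \<rho> < 1 \<and>
                            nu_tilde \<gamma> q0 \<theta> \<sigma> \<epsilon> (gphi t x) t v / \<epsilon>^2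
                              \<ge> C * (\<epsilon> powr (-4/5) * (1 + t) powr (\<rho> - 1)))))"
    proof (rule exI[of _ "min (c1/54) (\<theta>*\<sigma>/9)"], rule conjI[rotated],
        rule exI[of _ "min (c1/(c1+12)) (\<theta>*\<sigma>/4) * min (c1/2) 1"], rule conjI[rotated],
        intro allI impI ballI)
      show "0 < min (c1/54) (\<theta>*\<sigma>/9)" using nu_equiv(1) th sigma by simp
      show "0 < min (c1/(c1+12)) (\<theta>*\<sigma>/4) * min (c1/2) (1::real)" using nu_equiv(1) th sigma
        by (simp add: add_pos_pos)
    next
      fix \<delta> \<epsilon> T t :: real and x v :: vec3 and \<phi> :: "real \<Rightarrow> vec3 \<Rightarrow> real" and gphi :: "real \<Rightarrow> vec3 \<Rightarrow> vec3"
      assume H: "0 < \<delta> \<and> \<delta> \<le> min (c1/54) (\<theta>*\<sigma>/9) \<and> 0 < \<epsilon> \<and> \<epsilon> \<le> 1 \<and> 0 \<le> T \<and>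
              (\<forall>t\<in>{0..T}. \<forall>x. GDERIV (\<phi> t) x :> gphi t x) \<and>
              (\<forall>t\<in>{0..T}. W1inf_le (gphi t) (\<delta> / (1 + t) powr (5/4)))"
        and tT: "t \<in> {0..T}"
      have gb: "norm (gphi t x) \<le> \<delta> / (1 + t) powr (5/4)"
        using H tT W1inf_bound by blast
      note P = pointwise[OF gamma nu_equiv(1) nu_equiv(2) sigma, of \<theta> \<delta> \<epsilon> t "gphi t x"]
      have "0 \<le> t" using tT by simp
      then show "nu_tilde \<gamma> q0 \<theta> \<sigma> \<epsilon> (gphi t x) t v / \<epsilon>^2
                      \<ge> (min (c1/(c1+12)) (\<theta>*\<sigma>/4) * min (c1/2) 1) * (coll_freq \<gamma> q0 v / (2 * \<epsilon>^2) + (jbr v)^2 / (1 + t) powr (1 + \<sigma>))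
        \<and> (\<gamma> < 0 \<and> \<sigma> \<le> 1/24 \<longrightarrow>
                         (let \<rho> = (\<sigma> * \<gamma> + 2) / (2 - \<gamma>) in
                            3/8 < \<rho> \<and> \<rho> < 1 \<and>
                            nu_tilde \<gamma> q0 \<theta> \<sigma> \<epsilon> (gphi t x) t v / \<epsilon>^2
                              \<ge> (min (c1/(c1+12)) (\<theta>*\<sigma>/4) * min (c1/2) 1) * (\<epsilon> powr (-4/5) * (1 + t) powr (\<rho> - 1))))"
        using P[OF _ _ _ _ _ _ _ gb] th H by auto
    qed
  next
    show "(0::real) < 1" by simp
  qed
qed

end
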